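(* Let $k$ and $k'$ be positive-definite kernels on $\Omega\subseteq\mathbb{R}^d$. The following are equivalent: (a) the nonparametric models with covariances $k$ and $k'$ are prediction-equivalent on $\Omega$, i.e. $(k;\emptyset)\sim(k';\emptyset)$; (b) for every finite $\mathcal{X}\subset\Omega$ and every $\sigma^2>0$, the smoother matrices $\mathbf{M}_{\mathcal{X}}=\mathbf{K}_{\mathcal{X}}(\mathbf{K}_{\mathcal{X}}+\sigma^2\mathbf{I})^{-1}$ and $\mathbf{M}'_{\mathcal{X}}=\mathbf{K}'_{\mathcal{X}}(\mathbf{K}'_{\mathcal{X}}+\sigma^2\mathbf{I})^{-1}$ are equal.
   Context: For $\mathcal{X}=\{x_1,\ldots,x_n\}$, $\mathbf{K}_{\mathcal{X}}=[k(x_i,x_j)]_{i,j}$ and $\mathbf{K}'_{\mathcal{X}}=[k'(x_i,x_j)]_{i,j}$. GP regression with prior covariance $k$ and observations $\mathbf{y}\in\mathbb{R}^n$ at $\mathcal{X}$ with noise variance $\sigma^2$ has predictive mean $\mathbb{E}_k(f(x)\mid\mathbf{y})=\mathbf{k}_{x,\mathcal{X}}(\mathbf{K}_{\mathcal{X}}+\sigma^2\mathbf{I})^{-1}\mathbf{y}$ and predictive variance $\mathrm{Var}_k(f(x)\mid\mathbf{y})=k(x,x)-\mathbf{k}_{x,\mathcal{X}}(\mathbf{K}_{\mathcal{X}}+\sigma^2\mathbf{I})^{-1}\mathbf{k}_{x,\mathcal{X}}^\top$, $\mathbf{k}_{x,\mathcal{X}}=[k(x,x_1),\ldots,k(x,x_n)]$.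 $(k;\emptyset)\sim(k';\emptyset)$ means: for every finite $\mathcal{X}\subset\Omega$, every $x\in\Omega$, $\mathbf{y}\in\mathbb{R}^{|\mathcal{X}|}$ and $\sigma^2>0$, the predictive means under $k$ and $k'$ are equal and the predictive variances are equal. *)

theory Defs
  imports "HOL-Analysis.Analysis" "Jordan_Normal_Form.Gauss_Jordan_Elimination"
begin

text \<open>A finite set of inputs is represented by a duplicate-free list xs enumerating it.\<close>

definition pd_kernel_on :: "('a \<Rightarrow> 'a \<Rightarrow> real) \<Rightarrow> 'a set \<Rightarrow> bool" where
  "pd_kernel_on k \<Omega> \<longleftrightarrow>
     (\<forall>x\<in>\<Omega>. \<forall>y\<in>\<Omega>. k x y = k y x) \<and>
     (\<forall>xs c. distinct xs \<longrightarrow> set xs \<subseteq> \<Omega> \<longrightarrow>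
        (\<Sum>i<length xs. \<Sum>j<length xs. c i * c j * k (xs ! i) (xs ! j)) \<ge> 0)"

definition gram :: "('a \<Rightarrow> 'a \<Rightarrow> real) \<Rightarrow> 'a list \<Rightarrow> real mat" where
  "gram k xs = mat (length xs) (length xs) (\<lambda>(i, j). k (xs ! i) (xs ! j))"

definition kvec :: "('a \<Rightarrow> 'a \<Rightarrow> real) \<Rightarrow> 'a \<Rightarrow> 'a list \<Rightarrow> real vec" where
  "kvec k x xs = vec (length xs) (\<lambda>i. k x (xs ! i))"

definition reg_inv :: "('a \<Rightarrow> 'a \<Rightarrow> real) \<Rightarrow> 'a list \<Rightarrow> real \<Rightarrow> real mat" where
  "reg_inv k xs s2 = the (mat_inverse (gram k xs + s2 \<cdot>\<^sub>m 1\<^sub>m (length xs)))"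

definition pred_mean :: "('a \<Rightarrow> 'a \<Rightarrow> real) \<Rightarrow> 'a list \<Rightarrow> real \<Rightarrow> real vec \<Rightarrow> 'a \<Rightarrow> real" where
  "pred_mean k xs s2 y x = kvec k x xs \<bullet> (reg_inv k xs s2 *\<^sub>v y)"

definition pred_var :: "('a \<Rightarrow> 'a \<Rightarrow> real) \<Rightarrow> 'a list \<Rightarrow> real \<Rightarrow> 'a \<Rightarrow> real" where
  "pred_var k xs s2 x = k x x - kvec k x xs \<bullet> (reg_inv k xs s2 *\<^sub>v kvec k x xs)"

definition pred_equiv :: "('a \<Rightarrow> 'a \<Rightarrow> real) \<Rightarrow> ('a \<Rightarrow> 'a \<Rightarrow> real) \<Rightarrow> 'a set \<Rightarrow> bool" where
  "pred_equiv k k' \<Omega> \<longleftrightarrow>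
     (\<forall>xs x y s2. distinct xs \<longrightarrow> set xs \<subseteq> \<Omega> \<longrightarrow> x \<in> \<Omega> \<longrightarrow>
        y \<in> carrier_vec (length xs) \<longrightarrow> s2 > 0 \<longrightarrow>
        pred_mean k xs s2 y x = pred_mean k' xs s2 y x \<and>
        pred_var k xs s2 x = pred_var k' xs s2 x)"

definition smoother :: "('a \<Rightarrow> 'a \<Rightarrow> real) \<Rightarrow> 'a list \<Rightarrow> real \<Rightarrow> real mat" where
  "smoother k xs s2 = gram k xs * reg_inv k xs s2"

end

theory Submission imports Defs "Jordan_Normal_Form.Determinant" begin

lemma Av_entry:
  assumes "i < length xs" "v \<in> carrier_vec (length xs)"
  shows "((gram k xs + s \<cdot>\<^sub>m 1\<^sub>m (length xs)) *\<^sub>v v) $ i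
     = (\<Sum>j<length xs. k (xs!i) (xs!j) * v$j) + s * v$i"
proof -
  let ?n = "length xs"
  have "((gram k xs + s \<cdot>\<^sub>m 1\<^sub>m ?n) *\<^sub>v v) $ i
      = (\<Sum>j<?n. (k (xs!i) (xs!j) + s * (if i = j then 1 else 0)) * v$j)"
    using assms by (simp add: gram_def scalar_prod_def row_def atLeast0LessThan)
  also have "\<dots> = (\<Sum>j<?n. k (xs!i) (xs!j) * v$j + (if j = i then s * v$j else 0))"
    by (rule sum.cong) (auto simp: distrib_right)
  also have "\<dots> = (\<Sum>j<?n. k (xs!i) (xs!j) * v$j) + (\<Sum>j<?n. (if j = i then s * v$j else 0))"
    by (rule sum.distrib)
  also have "\<dots> = (\<Sum>j<length xs. k (xs!i) (xs!j) * v$j) + s * v$i"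
    using assms by simp
  finally show ?thesis .
qed

lemma reg_invertible:
  assumes pd: "pd_kernel_on k \<Omega>" and d: "distinct xs" and sub: "set xs \<subseteq> \<Omega>" and s: "s > 0"
  shows "\<exists>B. mat_inverse (gram k xs + s \<cdot>\<^sub>m 1\<^sub>m (length xs)) = Some B"
proof (rule ccontr)
  let ?n = "length xs"
  let ?A = "gram k xs + s \<cdot>\<^sub>m 1\<^sub>m ?n"
  have A: "?A \<in> carrier_mat ?n ?n" by (simp add: gram_def)
  assume "\<not> ?thesis"
  hence "mat_inverse ?A = None" by auto
  from mat_inverse(1)[OF A this, of "()"]
  have "Determinant.det ?A = 0" using det_non_zero_imp_unit[OF A, of "()"] by metis
  then obtain v where v: "v \<in> carrier_vec ?n" "v \<noteq> 0\<^sub>v ?n" "?A *\<^sub>v v = 0\<^sub>v ?n"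
    unfolding det_0_iff_vec_prod_zero[OF A] by blast
  have row0: "(\<Sum>j<?n. k (xs!i) (xs!j) * v$j) + s * v$i = 0" if "i < ?n" for i
  proof -
    have "(?A *\<^sub>v v) $ i = 0" using v(3) that by simp
    thus ?thesis using Av_entry[OF that v(1)] by simp
  qed
  have "(\<Sum>i<?n. v$i * ((\<Sum>j<?n. k (xs!i) (xs!j) * v$j) + s * v$i)) = 0"
    using row0 by simp
  moreover have "(\<Sum>i<?n. v$i * ((\<Sum>j<?n. k (xs!i) (xs!j) * v$j) + s * v$i))
     = (\<Sum>i<?n. \<Sum>j<?n. v$i * v$j * k (xs!i) (xs!j)) + s * (\<Sum>i<?n. v$i * v$i)"
  proof -
    have "(\<Sum>i<?n. v$i * ((\<Sum>j<?n. k (xs!i) (xs!j) * v$j) + s * v$i))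
      = (\<Sum>i<?n. (\<Sum>j<?n. v$i * v$j * k (xs!i) (xs!j)) + s * (v$i * v$i))"
    proof (rule sum.cong[OF refl])
      fix i
      have "v$i * (\<Sum>j<?n. k (xs!i) (xs!j) * v$j) = (\<Sum>j<?n. v$i * (k (xs!i) (xs!j) * v$j))"
        by (rule sum_distrib_left)
      also have "\<dots> = (\<Sum>j<?n. v$i * v$j * k (xs!i) (xs!j))"
        by (rule sum.cong[OF refl]) (simp only: mult.commute[of "k _ _" "v$_"] mult.assoc)
      finally show "v$i * ((\<Sum>j<?n. k (xs!i) (xs!j) * v$j) + s * v$i)
        = (\<Sum>j<?n. v$i * v$j * k (xs!i) (xs!j)) + s * (v$i * v$i)"
        by (simp add: distrib_left)
    qed
    also have "\<dots> = (\<Sum>i<?n. \<Sum>j<?n. v$i * v$j * k (xs!i) (xs!j)) + s * (\<Sum>i<?n. v$i * v$i)"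
      by (simp add: sum.distrib sum_distrib_left)
    finally show ?thesis .
  qed
  ultimately have eq: "(\<Sum>i<?n. \<Sum>j<?n. v$i * v$j * k (xs!i) (xs!j)) + s * (\<Sum>i<?n. v$i * v$i) = 0"
    by simp
  have ge: "(\<Sum>i<?n. \<Sum>j<?n. v$i * v$j * k (xs!i) (xs!j)) \<ge> 0"
    using pd d sub unfolding pd_kernel_on_def by blast
  have sq: "(\<Sum>i<?n. v$i * v$i) \<ge> 0" by (simp add: sum_nonneg)
  have "s * (\<Sum>i<?n. v$i * v$i) \<ge> 0" using s sq by simp
  hence "s * (\<Sum>i<?n. v$i * v$i) = 0" using eq ge by linarith
  hence "(\<Sum>i<?n. v$i * v$i) = 0" using s by simp

  hence "\<forall>i\<in>{..<?n}. v$i * v$i = 0"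
    by (subst (asm) sum_nonneg_eq_0_iff) auto
  hence "v = 0\<^sub>v ?n" using v(1) by (intro eq_vecI) auto
  with v(2) show False by simp
qed

lemma carrier_gram[simp]: "gram k xs \<in> carrier_mat (length xs) (length xs)"
  by (simp add: gram_def)

lemma smoother_entry:
  assumes inv: "mat_inverse (gram k xs + s \<cdot>\<^sub>m 1\<^sub>m (length xs)) = Some R"
    and ij: "i < length xs" "j < length xs"
  shows "smoother k xs s $$ (i,j) = (if i = j then 1 else 0) - s * R $$ (i,j)"
    and "smoother k xs s \<in> carrier_mat (length xs) (length xs)"
    and "reg_inv k xs s = R"
proof -
  let ?n = "length xs"
  let ?A = "gram k xs + s \<cdot>\<^sub>m 1\<^sub>m ?n"
  have A: "?A \<in> carrier_mat ?n ?n" by simp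
  note mi = mat_inverse(2)[OF A inv]
  have R: "R \<in> carrier_mat ?n ?n" using mi by blast
  show ri: "reg_inv k xs s = R" unfolding reg_inv_def inv by simp
  have "?A * R = gram k xs * R + (s \<cdot>\<^sub>m 1\<^sub>m ?n) * R"
    by (rule add_mult_distrib_mat[OF carrier_gram _ R]) simp
  hence "1\<^sub>m ?n = smoother k xs s + s \<cdot>\<^sub>m R"
    using mi R unfolding smoother_def ri by (simp add: mult_smult_assoc_mat[OF one_carrier_mat R])
  hence "1\<^sub>m ?n $$ (i,j) = (smoother k xs s + s \<cdot>\<^sub>m R) $$ (i,j)" by simp
  moreover have "smoother k xs s \<in> carrier_mat ?n ?n"
    unfolding smoother_def ri using R by (simp add: mult_carrier_mat[OF carrier_gram R])
  ultimately show "smoother k xs s $$ (i,j) = (if i = j then 1 else 0) - s * R $$ (i,j)"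
    using ij R by simp
  show "smoother k xs s \<in> carrier_mat ?n ?n"
    unfolding smoother_def ri using R by (simp add: mult_carrier_mat[OF carrier_gram R])
qed

lemma mean_at_data:
  assumes inv: "mat_inverse (gram k xs + s \<cdot>\<^sub>m 1\<^sub>m (length xs)) = Some R"
    and i: "i < length xs" and y: "y \<in> carrier_vec (length xs)"
  shows "pred_mean k xs s y (xs!i) = (smoother k xs s *\<^sub>v y) $ i"
proof -
  let ?n = "length xs"
  let ?A = "gram k xs + s \<cdot>\<^sub>m 1\<^sub>m ?n"
  have A: "?A \<in> carrier_mat ?n ?n" by simp
  note mi = mat_inverse(2)[OF A inv]
  have R: "R \<in> carrier_mat ?n ?n" using mi by blast
  have ri: "reg_inv k xs s = R" unfolding reg_inv_def inv by simp
  have kv: "kvec k (xs!i) xs = row (gram k xs) i"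
    using i by (intro eq_vecI) (auto simp: kvec_def gram_def)
  have "pred_mean k xs s y (xs!i) = (gram k xs *\<^sub>v (R *\<^sub>v y)) $ i"
    unfolding pred_mean_def kv ri using i by (simp add: gram_def)
  also have "\<dots> = ((gram k xs * R) *\<^sub>v y) $ i"
    using R y by (subst assoc_mult_mat_vec[OF carrier_gram R y]) simp
  finally show ?thesis unfolding smoother_def ri .
qed

lemma smoother_carrier:
  assumes inv: "mat_inverse (gram k xs + s \<cdot>\<^sub>m 1\<^sub>m (length xs)) = Some R"
  shows "smoother k xs s \<in> carrier_mat (length xs) (length xs)"
proof -
  have A: "gram k xs + s \<cdot>\<^sub>m 1\<^sub>m (length xs) \<in> carrier_mat (length xs) (length xs)" by simp
  have R: "R \<in> carrier_mat (length xs) (length xs)" using mat_inverse(2)[OF A inv] by blast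
  have ri: "reg_inv k xs s = R" unfolding reg_inv_def inv by simp
  show ?thesis unfolding smoother_def ri using mult_carrier_mat[OF carrier_gram R] .
qed

lemma scalar_unit:
  fixes v :: "real vec"
  assumes "v \<in> carrier_vec n" "j < n"
  shows "v \<bullet> unit_vec n j = v $ j"
proof -
  have "v \<bullet> unit_vec n j = (\<Sum>i\<in>{0..<n}. if i = j then v $ i else 0)"
    unfolding scalar_prod_def using assms by (intro sum.cong) auto
  thus ?thesis using assms by simp
qed

lemma gram_eq:
  assumes inv: "mat_inverse (gram k xs + s \<cdot>\<^sub>m 1\<^sub>m (length xs)) = Some R"
    and inv': "mat_inverse (gram k' xs + s \<cdot>\<^sub>m 1\<^sub>m (length xs)) = Some R'"
    and s: "s > 0"
    and sm: "smoother k xs s = smoother k' xs s"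
  shows "gram k xs = gram k' xs"
proof -
  let ?n = "length xs"
  let ?A = "gram k xs + s \<cdot>\<^sub>m 1\<^sub>m ?n"
  let ?A' = "gram k' xs + s \<cdot>\<^sub>m 1\<^sub>m ?n"
  have A: "?A \<in> carrier_mat ?n ?n" and A': "?A' \<in> carrier_mat ?n ?n" by auto
  note mi = mat_inverse(2)[OF A inv]
  note mi' = mat_inverse(2)[OF A' inv']
  have R: "R \<in> carrier_mat ?n ?n" using mi by blast
  have R': "R' \<in> carrier_mat ?n ?n" using mi' by blast
  have RR: "R = R'"
  proof (rule eq_matI)
    fix i j assume ij: "i < dim_row R'" "j < dim_col R'"
    hence ij': "i < ?n" "j < ?n" using R' by auto
    have "smoother k xs s $$ (i,j) = smoother k' xs s $$ (i,j)" using sm by simp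
    thus "R $$ (i,j) = R' $$ (i,j)"
      using smoother_entry(1)[OF inv ij'] smoother_entry(1)[OF inv' ij'] s by simp
  qed (use R R' in auto)
  have "?A = ?A * (R' * ?A')" using mi' A by simp
  also have "\<dots> = (?A * R') * ?A'" by (rule assoc_mult_mat[OF A R' A', symmetric])
  also have "\<dots> = ?A'" using mi RR A' by simp
  finally have AA: "?A = ?A'" .
  show ?thesis
  proof (rule eq_matI)
    fix i j assume ij: "i < dim_row (gram k' xs)" "j < dim_col (gram k' xs)"
    have "?A $$ (i,j) = ?A' $$ (i,j)" using AA by simp
    thus "gram k xs $$ (i,j) = gram k' xs $$ (i,j)" using ij by (simp add: gram_def)
  qed (auto simp: gram_def)
qed

theorem mainTheorem4:
  fixes k k' :: "real ^ 'd \<Rightarrow> real ^ 'd \<Rightarrow> real" and \<Omega> :: "(real ^ 'd) set"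
  assumes "pd_kernel_on k \<Omega>" and "pd_kernel_on k' \<Omega>"
  shows "pred_equiv k k' \<Omega> \<longleftrightarrow>
    (\<forall>xs s2. distinct xs \<longrightarrow> set xs \<subseteq> \<Omega> \<longrightarrow> s2 > 0 \<longrightarrow>
       smoother k xs s2 = smoother k' xs s2)"
proof
  assume pe: "pred_equiv k k' \<Omega>"
  show "\<forall>xs s2. distinct xs \<longrightarrow> set xs \<subseteq> \<Omega> \<longrightarrow> s2 > 0 \<longrightarrow>
       smoother k xs s2 = smoother k' xs s2"
  proof (intro allI impI)
    fix xs and s2 :: real
    assume d: "distinct xs" and sub: "set xs \<subseteq> \<Omega>" and s: "s2 > 0"
    obtain R where inv: "mat_inverse (gram k xs + s2 \<cdot>\<^sub>m 1\<^sub>m (length xs)) = Some R"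
      using reg_invertible[OF assms(1) d sub s] by blast
    obtain R' where inv': "mat_inverse (gram k' xs + s2 \<cdot>\<^sub>m 1\<^sub>m (length xs)) = Some R'"
      using reg_invertible[OF assms(2) d sub s] by blast
    have C: "smoother k xs s2 \<in> carrier_mat (length xs) (length xs)"
      "smoother k' xs s2 \<in> carrier_mat (length xs) (length xs)"
      using smoother_carrier[OF inv] smoother_carrier[OF inv'] by auto
    show "smoother k xs s2 = smoother k' xs s2"
    proof (rule eq_matI)
      fix i j assume ij: "i < dim_row (smoother k' xs s2)" "j < dim_col (smoother k' xs s2)"
      hence i: "i < length xs" and j: "j < length xs" using C by auto
      have x: "xs ! i \<in> \<Omega>" using sub i by auto
      have y: "unit_vec (length xs) j \<in> carrier_vec (length xs)" by simp
      have "pred_mean k xs s2 (unit_vec (length xs) j) (xs!i) = pred_mean k' xs s2 (unit_vec (length xs) j) (xs!i)"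
        using pe d sub x y s unfolding pred_equiv_def by blast
      hence "(smoother k xs s2 *\<^sub>v unit_vec (length xs) j) $ i = (smoother k' xs s2 *\<^sub>v unit_vec (length xs) j) $ i"
        using mean_at_data[OF inv i y] mean_at_data[OF inv' i y] by simp
      moreover have "(smoother k xs s2 *\<^sub>v unit_vec (length xs) j) $ i = smoother k xs s2 $$ (i,j)"
        using C i j by (simp add: scalar_unit)
      moreover have "(smoother k' xs s2 *\<^sub>v unit_vec (length xs) j) $ i = smoother k' xs s2 $$ (i,j)"
        using C i j by (simp add: scalar_unit)
      ultimately show "smoother k xs s2 $$ (i,j) = smoother k' xs s2 $$ (i,j)" by simp
    qed (use C in auto)
  qed
next
  assume H: "\<forall>xs s2. distinct xs \<longrightarrow> set xs \<subseteq> \<Omega> \<longrightarrow> s2 > 0 \<longrightarrow>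
       smoother k xs s2 = smoother k' xs s2"
  have G: "gram k xs = gram k' xs" if d: "distinct xs" and sub: "set xs \<subseteq> \<Omega>" for xs
  proof -
    have s: "(1::real) > 0" by simp
    obtain R where inv: "mat_inverse (gram k xs + 1 \<cdot>\<^sub>m 1\<^sub>m (length xs)) = Some R"
      using reg_invertible[OF assms(1) d sub s] by blast
    obtain R' where inv': "mat_inverse (gram k' xs + 1 \<cdot>\<^sub>m 1\<^sub>m (length xs)) = Some R'"
      using reg_invertible[OF assms(2) d sub s] by blast
    show ?thesis using gram_eq[OF inv inv' s] H d sub by simp
  qed
  have kk: "k a b = k' a b" if a: "a \<in> \<Omega>" and b: "b \<in> \<Omega>" for a b
  proof (cases "a = b")
    case True
    have "gram k [a] $$ (0,0) = gram k' [a] $$ (0,0)" using G[of "[a]"] a by simp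
    thus ?thesis using True by (simp add: gram_def)
  next
    case False
    have "gram k [a,b] $$ (0,1) = gram k' [a,b] $$ (0,1)" using G[of "[a,b]"] a b False by simp
    thus ?thesis by (simp add: gram_def)
  qed
  show "pred_equiv k k' \<Omega>"
    unfolding pred_equiv_def
  proof (intro allI impI)
    fix xs x and y :: "real vec" and s2 :: real
    assume d: "distinct xs" and sub: "set xs \<subseteq> \<Omega>" and x: "x \<in> \<Omega>"
    have g: "gram k xs = gram k' xs" using G d sub by blast
    have kv: "kvec k x xs = kvec k' x xs"
      unfolding kvec_def using sub x by (intro eq_vecI) (auto intro!: kk)
    have "reg_inv k xs s2 = reg_inv k' xs s2" unfolding reg_inv_def g ..
    thus "pred_mean k xs s2 y x = pred_mean k' xs s2 y x \<and> pred_var k xs s2 x = pred_var k' xs s2 x"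
      unfolding pred_mean_def pred_var_def kv using kk[OF x x] by simp
  qed
qed

end
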